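(* Let $(\Omega,\mathcal F,\mathbb P)$ be a probability space with an invertible, measurable, $\mathbb P$-preserving ergodic $\sigma$; let $M$ be a compact Riemannian manifold with normalized volume $m$, $I\subset(-1,1)$ an open interval containing $0$, and for $\omega\in\Omega$, $\epsilon\in I$ let $\mathcal L_{\omega,\epsilon}$ be the transfer operator (with respect to $m$) of a map $T_{\omega,\epsilon}\colon M\to M$, with $\mathcal L^n_{\omega,\epsilon}:=\mathcal L_{\sigma^{n-1}\omega,\epsilon}\circ\cdots\circ\mathcal L_{\omega,\epsilon}$. Assume there is a random variable $E(\omega)$ with $\|\mathcal L_{\omega,\epsilon}\mathbf 1\|_\infty\le E(\omega)$ for all $\epsilon\in I$ and $\mathbb P$-a.e. $\omega$. Assume also there are functions $h_{\omega,\epsilon}$, a number $\beta>1$ and $C_1\in L^{p_1}(\Omega,\mathcal F,\mathbb P)$ with $p_1\ge1$ such that for $\mathbb P$-a.e. $\omega$, all $n\ge1$, $\epsilon\in I$ and $h\in C^1(M)$, $$\|\mathcal L^n_{\omega,\epsilon}h-m(h)h_{\sigma^n\omega,\epsilon}\|_\infty\le C_1(\omega)n^{-\beta}\|h\|_{C^1}.$$ Then there exists $B_0\in L^{p_1}(\Omega,\mathcal F,\mathbb P)$ such that for $\mathbb P$-a.e. $\omega$, all $n\ge1$ and $\epsilon\in I$, $\|\mathcal L^n_{\sigma^{-n}\omega,\epsilon}\mathbf 1\|_\infty\le B_0(\omega)+E(\sigma^{-1}\omega)$.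
   Context: $m(h)=\int_M h\,dm$; $\mathbf 1$ is the constant function $1$. *)

theory Defs
  imports "HOL-Probability.Probability"
begin

text \<open>Essential supremum norm with respect to a measure (value in ereal;
  equal to infinity for non-measurable functions).\<close>
definition supnorm :: "'m measure \<Rightarrow> ('m \<Rightarrow> real) \<Rightarrow> ereal" where
  "supnorm m f = esssup m (\<lambda>x. ereal \<bar>f x\<bar>)"

definition is_transfer_operator ::
  "'m measure \<Rightarrow> ('m \<Rightarrow> 'm) \<Rightarrow> (('m \<Rightarrow> real) \<Rightarrow> ('m \<Rightarrow> real)) \<Rightarrow> bool" where
  "is_transfer_operator m T L \<longleftrightarrow>
     T \<in> m \<rightarrow>\<^sub>M m \<and>
     (\<forall>f g. integrable m f \<longrightarrow> g \<in> borel_measurable m \<longrightarrow> bounded (range g) \<longrightarrow>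
        integrable m (L f) \<and>
        (\<integral>x. L f x * g x \<partial>m) = (\<integral>x. f x * g (T x) \<partial>m))"

fun lcomp :: "('o \<Rightarrow> 'e \<Rightarrow> ('m \<Rightarrow> real) \<Rightarrow> ('m \<Rightarrow> real)) \<Rightarrow> ('o \<Rightarrow> 'o) \<Rightarrow> nat \<Rightarrow> 'o \<Rightarrow> 'e
      \<Rightarrow> ('m \<Rightarrow> real) \<Rightarrow> ('m \<Rightarrow> real)" where
  "lcomp L \<sigma> 0 \<omega> \<epsilon> = id"
| "lcomp L \<sigma> (Suc n) \<omega> \<epsilon> = L ((\<sigma> ^^ n) \<omega>) \<epsilon> \<circ> lcomp L \<sigma> n \<omega> \<epsilon>"

definition measure_preserving_map :: "'o measure \<Rightarrow> ('o \<Rightarrow> 'o) \<Rightarrow> bool" where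
  "measure_preserving_map P \<sigma> \<longleftrightarrow> \<sigma> \<in> P \<rightarrow>\<^sub>M P \<and>
     (\<forall>A \<in> sets P. emeasure P (\<sigma> -` A \<inter> space P) = emeasure P A)"

definition ergodic_map :: "'o measure \<Rightarrow> ('o \<Rightarrow> 'o) \<Rightarrow> bool" where
  "ergodic_map P \<sigma> \<longleftrightarrow> (\<forall>A \<in> sets P. \<sigma> -` A \<inter> space P = A \<longrightarrow>
       emeasure P A = 0 \<or> emeasure P A = emeasure P (space P))"

definition in_Lp :: "'o measure \<Rightarrow> real \<Rightarrow> ('o \<Rightarrow> real) \<Rightarrow> bool" where
  "in_Lp P p f \<longleftrightarrow> f \<in> borel_measurable P \<and> integrable P (\<lambda>x. \<bar>f x\<bar> powr p)"

end

theory Submission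
  imports Defs
begin

lemma distr_inv:
  assumes P: "prob_space P"
    and inv1: "\<And>x. x \<in> space P \<Longrightarrow> \<sigma> (\<sigma>i x) = x"
    and inv2: "\<And>x. x \<in> space P \<Longrightarrow> \<sigma>i (\<sigma> x) = x"
    and \<sigma>i_meas: "\<sigma>i \<in> P \<rightarrow>\<^sub>M P"
    and mp: "measure_preserving_map P \<sigma>"
  shows "distr P P \<sigma>i = P"
proof (rule measure_eqI)
  show "sets (distr P P \<sigma>i) = sets P" by simp
  fix A assume A: "A \<in> sets (distr P P \<sigma>i)"
  hence A': "A \<in> sets P" by simp
  have sm: "\<sigma> \<in> P \<rightarrow>\<^sub>M P" using mp unfolding measure_preserving_map_def by blast
  have B: "\<sigma>i -` A \<inter> space P \<in> sets P" using \<sigma>i_meas A' by (rule measurable_sets)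
  have eq: "\<sigma> -` (\<sigma>i -` A \<inter> space P) \<inter> space P = A"
  proof
    show "\<sigma> -` (\<sigma>i -` A \<inter> space P) \<inter> space P \<subseteq> A" using inv2 by auto
    show "A \<subseteq> \<sigma> -` (\<sigma>i -` A \<inter> space P) \<inter> space P"
      using inv2 sets.sets_into_space[OF A'] measurable_space[OF sm] by auto
  qed
  have "emeasure (distr P P \<sigma>i) A = emeasure P (\<sigma>i -` A \<inter> space P)"
    using A' \<sigma>i_meas by (simp add: emeasure_distr)
  also have "\<dots> = emeasure P (\<sigma> -` (\<sigma>i -` A \<inter> space P) \<inter> space P)"
    using mp B unfolding measure_preserving_map_def by (metis (no_types))
  also have "\<dots> = emeasure P A" using eq by simp
  finally show "emeasure (distr P P \<sigma>i) A = emeasure P A" .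
qed

lemma funpow_meas: "f \<in> P \<rightarrow>\<^sub>M P \<Longrightarrow> (f ^^ n) \<in> P \<rightarrow>\<^sub>M P"
  by (induction n) (auto simp: measurable_ident_sets intro: measurable_comp)

lemma distr_funpow:
  assumes "f \<in> P \<rightarrow>\<^sub>M P" "distr P P f = P"
  shows "distr P P (f ^^ n) = P"
proof (induction n)
  case 0 then show ?case by (simp add: distr_id2)
next
  case (Suc n)
  have "distr P P (f ^^ Suc n) = distr P P (f \<circ> (f ^^ n))" by simp
  also have "\<dots> = distr (distr P P (f ^^ n)) P f"
    by (rule distr_distr[symmetric]) (use assms funpow_meas in auto)
  also have "\<dots> = P" using Suc assms by simp
  finally show ?case .
qed

lemma AE_funpow:
  assumes "f \<in> P \<rightarrow>\<^sub>M P" "distr P P f = P" "AE x in P. Q x"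
  shows "AE x in P. Q ((f ^^ n) x)"
proof -
  have "AE x in distr P P (f ^^ n). Q x" using assms distr_funpow by metis
  then show ?thesis using AE_distrD[OF funpow_meas[OF assms(1)]] by blast
qed

lemma funpow_space: "f \<in> P \<rightarrow>\<^sub>M P \<Longrightarrow> x \<in> space P \<Longrightarrow> (f ^^ n) x \<in> space P"
  using funpow_meas measurable_space by metis

lemma funpow_inv:
  assumes "\<And>x. x \<in> space P \<Longrightarrow> g (f x) = x" "f \<in> P \<rightarrow>\<^sub>M P" "x \<in> space P"
  shows "(g ^^ n) ((f ^^ n) x) = x"
  using assms(3)
proof (induction n arbitrary: x)
  case (Suc n)
  have "(g ^^ Suc n) ((f ^^ Suc n) x) = (g ^^ n) (g (f ((f ^^ n) x)))"
    by (simp add: funpow_swap1)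
  also have "\<dots> = (g ^^ n) ((f ^^ n) x)" using assms funpow_space Suc by metis
  finally show ?case using Suc by simp
qed simp

lemma lcomp_int:
  assumes m: "prob_space m" and sm: "\<sigma> \<in> P \<rightarrow>\<^sub>M P"
    and TO: "\<And>\<omega>. \<omega> \<in> space P \<Longrightarrow> is_transfer_operator m (T \<omega>) (L \<omega> \<epsilon>)"
    and w: "\<omega> \<in> space P"
  shows "integrable m (lcomp L \<sigma> n \<omega> \<epsilon> (\<lambda>_. 1))"
proof (induction n)
  case 0 then show ?case using m by (simp add: finite_measure.integrable_const prob_space.axioms(1))
next
  case (Suc n)
  have "(\<sigma> ^^ n) \<omega> \<in> space P" using funpow_space[OF sm w] .
  moreover have "bounded (range (\<lambda>_::'m. 1::real))" by simp
  ultimately have "integrable m (L ((\<sigma> ^^ n) \<omega>) \<epsilon> (lcomp L \<sigma> n \<omega> \<epsilon> (\<lambda>_. 1)))"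
    using TO[of "(\<sigma> ^^ n) \<omega>"] Suc unfolding is_transfer_operator_def
    by (meson borel_measurable_const)
  then show ?case by simp
qed


lemma series_part:
  fixes C1 :: "'o \<Rightarrow> real"
  assumes P: "prob_space P" and sim: "\<sigma>i \<in> P \<rightarrow>\<^sub>M P" and d: "distr P P \<sigma>i = P"
    and C1: "in_Lp P p C1" and p: "p \<ge> 1" and \<beta>: "\<beta> > 1"
  defines "f \<equiv> \<lambda>n \<omega>. (\<bar>C1 ((\<sigma>i ^^ n) \<omega>)\<bar> * real n powr (-\<beta>)) powr p"
  shows "(\<lambda>\<omega>. \<Sum>n. ennreal (f n \<omega>)) \<in> borel_measurable P"
    and "(\<integral>\<^sup>+\<omega>. (\<Sum>n. ennreal (f n \<omega>)) \<partial>P) \<noteq> \<infinity>"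
proof -
  have C1m: "C1 \<in> borel_measurable P" using C1 unfolding in_Lp_def by blast
  have fm: "\<And>n. (\<lambda>\<omega>. ennreal (f n \<omega>)) \<in> borel_measurable P"
    unfolding f_def using measurable_comp[OF funpow_meas[OF sim] C1m] by (simp add: o_def)
  then show "(\<lambda>\<omega>. \<Sum>n. ennreal (f n \<omega>)) \<in> borel_measurable P" by measurable
  define K where "K = (\<integral>\<^sup>+\<omega>. ennreal (\<bar>C1 \<omega>\<bar> powr p) \<partial>P)"
  have intC: "integrable P (\<lambda>x. \<bar>C1 x\<bar> powr p)" using C1 unfolding in_Lp_def by blast
  have K: "K = ennreal (\<integral>\<omega>. \<bar>C1 \<omega>\<bar> powr p \<partial>P)"
    unfolding K_def by (rule nn_integral_eq_integral[OF intC]) auto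
  have fe: "f n \<omega> = \<bar>C1 ((\<sigma>i ^^ n) \<omega>)\<bar> powr p * real n powr (-\<beta> * p)" for n \<omega>
    unfolding f_def by (simp add: powr_mult powr_powr)
  have In: "(\<integral>\<^sup>+\<omega>. ennreal (f n \<omega>) \<partial>P) = ennreal (real n powr (-\<beta> * p)) * K" for n
  proof -
    have "(\<integral>\<^sup>+\<omega>. ennreal (f n \<omega>) \<partial>P)
       = (\<integral>\<^sup>+\<omega>. ennreal (real n powr (-\<beta> * p)) * ennreal (\<bar>C1 ((\<sigma>i ^^ n) \<omega>)\<bar> powr p) \<partial>P)"
      by (simp add: fe ennreal_mult' mult.commute)
    also have "\<dots> = ennreal (real n powr (-\<beta> * p)) * (\<integral>\<^sup>+\<omega>. ennreal (\<bar>C1 ((\<sigma>i ^^ n) \<omega>)\<bar> powr p) \<partial>P)"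
      by (rule nn_integral_cmult) (use measurable_comp[OF funpow_meas[OF sim] C1m] in \<open>simp add: o_def\<close>)
    also have "(\<integral>\<^sup>+\<omega>. ennreal (\<bar>C1 ((\<sigma>i ^^ n) \<omega>)\<bar> powr p) \<partial>P)
        = (\<integral>\<^sup>+\<omega>. ennreal (\<bar>C1 \<omega>\<bar> powr p) \<partial>distr P P (\<sigma>i ^^ n))"
      by (rule nn_integral_distr[symmetric]) (use funpow_meas[OF sim] C1m in auto)
    also have "\<dots> = K" unfolding K_def using distr_funpow[OF sim d] by simp
    finally show ?thesis .
  qed
  have bp: "1 < \<beta> * p" using \<beta> p mult_left_mono[of 1 p \<beta>] by linarith
  have sm: "summable (\<lambda>n. real n powr (-\<beta> * p))"
    using \<beta> p by (subst summable_real_powr_iff) (use bp in auto)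
  have "(\<integral>\<^sup>+\<omega>. (\<Sum>n. ennreal (f n \<omega>)) \<partial>P) = (\<Sum>n. \<integral>\<^sup>+\<omega>. ennreal (f n \<omega>) \<partial>P)"
    by (rule nn_integral_suminf[OF fm])
  also have "\<dots> = (\<Sum>n. ennreal (real n powr (-\<beta> * p))) * K" by (simp add: In)
  also have "\<dots> = ennreal (\<Sum>n. real n powr (-\<beta> * p)) * K"
    by (subst suminf_ennreal2[OF _ sm]) auto
  finally show "(\<integral>\<^sup>+\<omega>. (\<Sum>n. ennreal (f n \<omega>)) \<partial>P) \<noteq> \<infinity>"
    by (simp add: K ennreal_mult_eq_top_iff)
qed


lemma supnorm_AE: "supnorm m g \<le> ereal r \<Longrightarrow> AE x in m. \<bar>g x\<bar> \<le> r"
proof -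
  assume a: "supnorm m g \<le> ereal r"
  have "AE x in m. ereal \<bar>g x\<bar> \<le> supnorm m g" unfolding supnorm_def by (rule esssup_AE)
  moreover have "\<And>x. ereal \<bar>g x\<bar> \<le> supnorm m g \<Longrightarrow> \<bar>g x\<bar> \<le> r"
    using a by (metis ereal_less_eq(3) order_trans)
  ultimately show ?thesis by (auto elim: AE_mp)
qed

lemma term_le_sum: "f i \<le> (\<Sum>i. f i :: ennreal)"
  using ennreal_suminf_lessD[of f "f i"] by (meson not_less order_less_irrefl)

lemma G_int:
  assumes "Gs \<in> borel_measurable P" "(\<integral>\<^sup>+\<omega>. Gs \<omega> \<partial>P) \<noteq> \<infinity>"
  shows "integrable P (\<lambda>\<omega>. enn2real (Gs \<omega>))"
proof (rule integrableI_bounded)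
  show "(\<lambda>\<omega>. enn2real (Gs \<omega>)) \<in> borel_measurable P" using assms(1) by measurable
  have "(\<integral>\<^sup>+x. ennreal (norm (enn2real (Gs x))) \<partial>P) \<le> (\<integral>\<^sup>+\<omega>. Gs \<omega> \<partial>P)"
    by (rule nn_integral_mono) (simp add: ennreal_enn2real_if)
  then show "(\<integral>\<^sup>+x. ennreal (norm (enn2real (Gs x))) \<partial>P) < \<infinity>"
    using assms(2) by (simp add: less_top order_le_less_trans)
qed


theorem lemma22:
  fixes P :: "'o measure" and \<sigma> \<sigma>i :: "'o \<Rightarrow> 'o"
    and m :: "'m measure" and T :: "'o \<Rightarrow> real \<Rightarrow> 'm \<Rightarrow> 'm"
    and L :: "'o \<Rightarrow> real \<Rightarrow> ('m \<Rightarrow> real) \<Rightarrow> ('m \<Rightarrow> real)"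
    and a b :: real
    and C1set :: "('m \<Rightarrow> real) set" and c1norm :: "('m \<Rightarrow> real) \<Rightarrow> real"
    and E C1 :: "'o \<Rightarrow> real" and hh :: "'o \<Rightarrow> real \<Rightarrow> 'm \<Rightarrow> real"
    and \<beta> p1 :: real
  assumes P: "prob_space P"
    and inv1: "\<And>x. x \<in> space P \<Longrightarrow> \<sigma> (\<sigma>i x) = x"
    and inv2: "\<And>x. x \<in> space P \<Longrightarrow> \<sigma>i (\<sigma> x) = x"
    and \<sigma>i_meas: "\<sigma>i \<in> P \<rightarrow>\<^sub>M P"
    and mp: "measure_preserving_map P \<sigma>"
    and erg: "ergodic_map P \<sigma>"
    and m: "prob_space m"
    and I: "-1 \<le> a" "a < 0" "0 < b" "b \<le> 1"
    and TO: "\<And>\<omega> \<epsilon>. \<omega> \<in> space P \<Longrightarrow> \<epsilon> \<in> {a<..<b} \<Longrightarrow>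
               is_transfer_operator m (T \<omega> \<epsilon>) (L \<omega> \<epsilon>)"
    and one_C1: "(\<lambda>_. 1) \<in> C1set"
    and E: "E \<in> borel_measurable P"
    and E_bound: "AE \<omega> in P. \<forall>\<epsilon> \<in> {a<..<b}. supnorm m (L \<omega> \<epsilon> (\<lambda>_. 1)) \<le> ereal (E \<omega>)"
    and \<beta>: "\<beta> > 1"
    and p1: "p1 \<ge> 1"
    and C1: "in_Lp P p1 C1"
    and decay: "AE \<omega> in P. \<forall>n \<ge> 1. \<forall>\<epsilon> \<in> {a<..<b}. \<forall>h \<in> C1set.
       supnorm m (\<lambda>x. lcomp L \<sigma> n \<omega> \<epsilon> h x - (\<integral>y. h y \<partial>m) * hh ((\<sigma> ^^ n) \<omega>) \<epsilon> x)
         \<le> ereal (C1 \<omega> * real n powr (-\<beta>) * c1norm h)"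
  shows "\<exists>B0. in_Lp P p1 B0 \<and>
    (AE \<omega> in P. \<forall>n \<ge> 1. \<forall>\<epsilon> \<in> {a<..<b}.
       supnorm m (lcomp L \<sigma> n ((\<sigma>i ^^ n) \<omega>) \<epsilon> (\<lambda>_. 1)) \<le> ereal (B0 \<omega> + E (\<sigma>i \<omega>)))"
proof -
  have sm: "\<sigma> \<in> P \<rightarrow>\<^sub>M P" using mp unfolding measure_preserving_map_def by blast
  have d: "distr P P \<sigma>i = P" by (rule distr_inv[OF P inv1 inv2 \<sigma>i_meas mp])
  define c where "c = \<bar>c1norm (\<lambda>_. 1)\<bar>"
  define f where "f = (\<lambda>n \<omega>. (\<bar>C1 ((\<sigma>i ^^ n) \<omega>)\<bar> * real n powr (-\<beta>)) powr p1)"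
  define Gs where "Gs = (\<lambda>\<omega>. \<Sum>n. ennreal (f n \<omega>))"
  define G where "G = (\<lambda>\<omega>. enn2real (Gs \<omega>))"
  define S where "S = (\<lambda>\<omega>. G \<omega> powr (1 / p1))"
  define B0 where "B0 = (\<lambda>\<omega>. 2 * c * S \<omega>)"
  have Gsm: "Gs \<in> borel_measurable P"
    using series_part(1)[OF P \<sigma>i_meas d C1 p1 \<beta>] unfolding Gs_def f_def .
  have Gsi: "(\<integral>\<^sup>+\<omega>. Gs \<omega> \<partial>P) \<noteq> \<infinity>"
    using series_part(2)[OF P \<sigma>i_meas d C1 p1 \<beta>] unfolding Gs_def f_def .
  have Gint: "integrable P G" unfolding G_def by (rule G_int[OF Gsm Gsi])
  have G0: "G \<omega> \<ge> 0" for \<omega> unfolding G_def by simp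
  have "in_Lp P p1 B0"
    unfolding in_Lp_def
  proof
    show "B0 \<in> borel_measurable P" unfolding B0_def S_def G_def using Gsm by measurable
    have eq: "\<bar>B0 \<omega>\<bar> powr p1 = (2 * c) powr p1 * G \<omega>" for \<omega>
    proof -
      have "\<bar>B0 \<omega>\<bar> = 2 * c * S \<omega>" unfolding B0_def S_def c_def by simp
      then have "\<bar>B0 \<omega>\<bar> powr p1 = (2 * c) powr p1 * S \<omega> powr p1"
        unfolding S_def c_def by (simp add: powr_mult)
      also have "S \<omega> powr p1 = G \<omega>" unfolding S_def using p1 G0[of \<omega>]
        by (simp add: powr_powr)
      finally show ?thesis .
    qed
    show "integrable P (\<lambda>x. \<bar>B0 x\<bar> powr p1)"
      unfolding eq using Gint by simp
  qed
  moreover have "AE \<omega> in P. \<forall>n \<ge> 1. \<forall>\<epsilon> \<in> {a<..<b}.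
       supnorm m (lcomp L \<sigma> n ((\<sigma>i ^^ n) \<omega>) \<epsilon> (\<lambda>_. 1)) \<le> ereal (B0 \<omega> + E (\<sigma>i \<omega>))"
  proof -
    have A1: "AE \<omega> in P. Gs \<omega> \<noteq> \<infinity>" by (rule nn_integral_PInf_AE[OF Gsm Gsi])
    have A2: "AE \<omega> in P. \<forall>k. \<forall>n \<ge> 1. \<forall>\<epsilon> \<in> {a<..<b}. \<forall>h \<in> C1set.
       supnorm m (\<lambda>x. lcomp L \<sigma> n ((\<sigma>i ^^ k) \<omega>) \<epsilon> h x - (\<integral>y. h y \<partial>m) * hh ((\<sigma> ^^ n) ((\<sigma>i ^^ k) \<omega>)) \<epsilon> x)
         \<le> ereal (C1 ((\<sigma>i ^^ k) \<omega>) * real n powr (-\<beta>) * c1norm h)"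
      by (rule AE_all_countable[THEN iffD2]) (use AE_funpow[OF \<sigma>i_meas d decay] in blast)
    have A3: "AE \<omega> in P. \<forall>\<epsilon> \<in> {a<..<b}. supnorm m (L (\<sigma>i \<omega>) \<epsilon> (\<lambda>_. 1)) \<le> ereal (E (\<sigma>i \<omega>))"
      using AE_funpow[OF \<sigma>i_meas d E_bound, of 1] by simp
    show ?thesis using A1 A2 A3 AE_space
    proof eventually_elim
      case (elim \<omega>)
      note w = \<open>\<omega> \<in> space P\<close>
      have tb: "\<bar>C1 ((\<sigma>i ^^ k) \<omega>)\<bar> * real k powr (-\<beta>) \<le> S \<omega>" for k
      proof -
        define t where "t = \<bar>C1 ((\<sigma>i ^^ k) \<omega>)\<bar> * real k powr (-\<beta>)"
        have t0: "t \<ge> 0" unfolding t_def by simp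
        have "ennreal (f k \<omega>) \<le> Gs \<omega>" unfolding Gs_def by (rule term_le_sum)
        then have "f k \<omega> \<le> G \<omega>" unfolding G_def
          using enn2real_mono[of "ennreal (f k \<omega>)" "Gs \<omega>"] elim(1) by (simp add: f_def top.not_eq_extremum)
        then have "f k \<omega> powr (1 / p1) \<le> S \<omega>" unfolding S_def
          by (intro powr_mono2) (use p1 f_def in auto)
        moreover have "f k \<omega> powr (1 / p1) = t" unfolding f_def t_def[symmetric]
          using t0 p1 by (simp add: powr_powr)
        ultimately show ?thesis unfolding t_def by simp
      qed
      show ?case
      proof (intro allI impI ballI)
        fix n :: nat and \<epsilon> assume n: "n \<ge> 1" and e: "\<epsilon> \<in> {a<..<b}"
        define \<omega>' where "\<omega>' = (\<sigma>i ^^ n) \<omega>"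
        have inv: "(\<sigma> ^^ n) \<omega>' = \<omega>" unfolding \<omega>'_def
          by (rule funpow_inv[OF inv1 \<sigma>i_meas w])
        have int1: "(\<integral>y. (1::real) \<partial>m) = 1" using m by (simp add: prob_space.prob_space)
        have D1: "supnorm m (\<lambda>x. lcomp L \<sigma> n \<omega>' \<epsilon> (\<lambda>_. 1) x - hh \<omega> \<epsilon> x)
             \<le> ereal (C1 \<omega>' * real n powr (-\<beta>) * c1norm (\<lambda>_. 1))"
          using elim(2)[THEN spec[of _ n], THEN spec[of _ n], rule_format, OF n e one_C1] n e one_C1 inv int1 unfolding \<omega>'_def by simp
        have D2: "supnorm m (\<lambda>x. L (\<sigma>i \<omega>) \<epsilon> (\<lambda>_. 1) x - hh \<omega> \<epsilon> x)
             \<le> ereal (C1 (\<sigma>i \<omega>) * c1norm (\<lambda>_. 1))"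
          using elim(2)[THEN spec[of _ 1], THEN spec[of _ 1], rule_format, OF _ e one_C1] e one_C1 int1 inv1[OF w] by simp
        have D3: "supnorm m (L (\<sigma>i \<omega>) \<epsilon> (\<lambda>_. 1)) \<le> ereal (E (\<sigma>i \<omega>))"
          using elim(3) e by blast
        have r1: "C1 \<omega>' * real n powr (-\<beta>) * c1norm (\<lambda>_. 1) \<le> c * S \<omega>"
        proof -
          have "C1 \<omega>' * real n powr (-\<beta>) * c1norm (\<lambda>_. 1) \<le> \<bar>C1 \<omega>' * real n powr (-\<beta>) * c1norm (\<lambda>_. 1)\<bar>"
            by simp
          also have "\<dots> = (\<bar>C1 \<omega>'\<bar> * real n powr (-\<beta>)) * c" unfolding c_def by (simp add: abs_mult)
          also have "\<dots> \<le> S \<omega> * c" using tb[of n] unfolding \<omega>'_def c_def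
            by (intro mult_right_mono) auto
          finally show ?thesis by (simp add: mult.commute)
        qed
        have r2: "C1 (\<sigma>i \<omega>) * c1norm (\<lambda>_. 1) \<le> c * S \<omega>"
        proof -
          have "C1 (\<sigma>i \<omega>) * c1norm (\<lambda>_. 1) \<le> \<bar>C1 (\<sigma>i \<omega>)\<bar> * c" unfolding c_def
            by (metis abs_ge_self abs_mult)
          also have "\<dots> \<le> S \<omega> * c" using tb[of 1] unfolding c_def
            by (intro mult_right_mono) auto
          finally show ?thesis by (simp add: mult.commute)
        qed
        have "AE x in m. \<bar>lcomp L \<sigma> n \<omega>' \<epsilon> (\<lambda>_. 1) x\<bar> \<le> B0 \<omega> + E (\<sigma>i \<omega>)"
          using supnorm_AE[OF D1] supnorm_AE[OF D2] supnorm_AE[OF D3]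
        proof eventually_elim
          case (elim x)
          then show ?case using r1 r2 unfolding B0_def by linarith
        qed
        then have AEb: "AE x in m. ereal \<bar>lcomp L \<sigma> n \<omega>' \<epsilon> (\<lambda>_. 1) x\<bar> \<le> ereal (B0 \<omega> + E (\<sigma>i \<omega>))"
          by simp
        have w': "\<omega>' \<in> space P" unfolding \<omega>'_def by (rule funpow_space[OF \<sigma>i_meas w])
        have "integrable m (lcomp L \<sigma> n \<omega>' \<epsilon> (\<lambda>_. 1))"
          by (rule lcomp_int[OF m sm _ w']) (use TO e in blast)
        then have "(\<lambda>x. ereal \<bar>lcomp L \<sigma> n \<omega>' \<epsilon> (\<lambda>_. 1) x\<bar>) \<in> borel_measurable m"
          by measurable
        then show "supnorm m (lcomp L \<sigma> n ((\<sigma>i ^^ n) \<omega>) \<epsilon> (\<lambda>_. 1)) \<le> ereal (B0 \<omega> + E (\<sigma>i \<omega>))"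
          unfolding supnorm_def \<omega>'_def[symmetric] using AEb by (rule esssup_I)
      qed
    qed
  qed
  ultimately show ?thesis by blast
qed

end
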